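(* Fix reals $0<\varepsilon<1$ and $c\ge 12/\varepsilon$, and let $S$ and the squares $Q_n$ be as produced by the construction described in the context (with any choices allowed there). Call a lattice point of $Q_n$ red if it lies on a common line with two points of $S\cap Q_m$ for some $m<n$. Call an (unordered) pair of lattice points of $Q_n$ blue if at least one point of the pair is not red and the two points lie on a common line with a point of $S\cap Q_m$ for some $m<n$. Then for all sufficiently large $n$, the number of blue pairs in $Q_n$ is at most $$\frac{8\cdot 2^{3n}}{c^{4}n^{3+4\varepsilon}}.$$
   Context: Construction. Fix $0<\varepsilon<1$ and $c\ge 12/\varepsilon$. For each sufficiently large integer $n$ (say $n\ge n_0$), let $s_n=\left\lfloor\frac{2^n}{cn^{1+\varepsilon}}\right\rfloor$, $Y_n=\left\lfloor\frac{2^n}{n^{\varepsilon}}\right\rfloor$, and let $Q_n=[2^n,2^n+s_n]\times[Y_n-s_n,Y_n]$ be the axis-parallel square with side $s_n$ and top left corner $(2^n,Y_n)$. Let $p_n$ be the largest prime smaller than $s_n$. For integers $a,b$, let $\mathcal{P}_n(a,b)=\{(2^n+x,\;Y_n-y): x,y\in\{0,\dots,p_n-1\},\ y\equiv (x-a)^2+b \pmod{p_n}\}$, a translated copy of the modular parabola $y=(x-a)^2+b \bmod p_n$ in $Q_n$. The set $S\subseteq\mathbb{Z}^2$ is built iteratively for $n=n_0,n_0+1,\dots$: given the already selected points $S_{<n}=S\cap\bigcup_{m<n}Q_m$, choose parameters $(a_n,b_n)\in\{0,\dots,p_n-1\}^2$ minimizing the number of collinear triples formed by points of $\mathcal{P}_n(a_n,b_n)\cup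 S_{<n}$ that contain points of both $\mathcal{P}_n(a_n,b_n)$ and $S_{<n}$; delete from $\mathcal{P}_n=\mathcal{P}_n(a_n,b_n)$ one point of each such triple, and add the remaining points of $\mathcal{P}_n$ to $S$. Thus $S\cap Q_n\subseteq\mathcal{P}_n$. *)

theory Defs
  imports "HOL-Computational_Algebra.Primes" Complex_Main
begin

type_synonym pt = "int \<times> int"

definition coll :: "pt \<Rightarrow> pt \<Rightarrow> pt \<Rightarrow> bool" where
  "coll u v w \<longleftrightarrow>
     (fst v - fst u) * (snd w - snd u) = (fst w - fst u) * (snd v - snd u)"

definition side :: "real \<Rightarrow> real \<Rightarrow> nat \<Rightarrow> int" where
  "side \<epsilon> c n = \<lfloor>2 ^ n / (c * real n powr (1 + \<epsilon>))\<rfloor>"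

definition Ytop :: "real \<Rightarrow> nat \<Rightarrow> int" where
  "Ytop \<epsilon> n = \<lfloor>2 ^ n / real n powr \<epsilon>\<rfloor>"

definition Qsq :: "real \<Rightarrow> real \<Rightarrow> nat \<Rightarrow> pt set" where
  "Qsq \<epsilon> c n = {(x, y). 2 ^ n \<le> x \<and> x \<le> 2 ^ n + side \<epsilon> c n \<and>
                        Ytop \<epsilon> n - side \<epsilon> c n \<le> y \<and> y \<le> Ytop \<epsilon> n}"

definition pr :: "real \<Rightarrow> real \<Rightarrow> nat \<Rightarrow> int" where
  "pr \<epsilon> c n = (GREATEST p. prime p \<and> p < side \<epsilon> c n)"

definition parab :: "real \<Rightarrow> real \<Rightarrow> nat \<Rightarrow> int \<Rightarrow> int \<Rightarrow> pt set" where
  "parab \<epsilon> c n a b = {(2 ^ n + x, Ytop \<epsilon> n - y) | x y.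
      0 \<le> x \<and> x < pr \<epsilon> c n \<and> 0 \<le> y \<and> y < pr \<epsilon> c n \<and>
      y = ((x - a) ^ 2 + b) mod pr \<epsilon> c n}"

definition Sbefore :: "real \<Rightarrow> real \<Rightarrow> pt set \<Rightarrow> nat \<Rightarrow> pt set" where
  "Sbefore \<epsilon> c S n = S \<inter> (\<Union>m<n. Qsq \<epsilon> c m)"

definition mixed_triples :: "pt set \<Rightarrow> pt set \<Rightarrow> pt set set" where
  "mixed_triples P T = {t. \<exists>u v w. t = {u, v, w} \<and> card t = 3 \<and> t \<subseteq> P \<union> T \<and>
      coll u v w \<and> t \<inter> P \<noteq> {} \<and> t \<inter> T \<noteq> {}}"

definition constructed :: "real \<Rightarrow> real \<Rightarrow> nat \<Rightarrow> pt set \<Rightarrow> bool" where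
  "constructed \<epsilon> c n0 S \<longleftrightarrow>
     S \<subseteq> (\<Union>n\<in>{n0..}. Qsq \<epsilon> c n) \<and>
     (\<forall>n\<ge>n0. \<exists>a b f.
        a \<in> {0..<pr \<epsilon> c n} \<and> b \<in> {0..<pr \<epsilon> c n} \<and>
        (\<forall>a'\<in>{0..<pr \<epsilon> c n}. \<forall>b'\<in>{0..<pr \<epsilon> c n}.
           card (mixed_triples (parab \<epsilon> c n a b) (Sbefore \<epsilon> c S n))
             \<le> card (mixed_triples (parab \<epsilon> c n a' b') (Sbefore \<epsilon> c S n))) \<and>
        (\<forall>t\<in>mixed_triples (parab \<epsilon> c n a b) (Sbefore \<epsilon> c S n).
           f t \<in> t \<inter> parab \<epsilon> c n a b) \<and>
        S \<inter> Qsq \<epsilon> c n = parab \<epsilon> c n a b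
            - f ` mixed_triples (parab \<epsilon> c n a b) (Sbefore \<epsilon> c S n))"

definition red :: "real \<Rightarrow> real \<Rightarrow> pt set \<Rightarrow> nat \<Rightarrow> pt \<Rightarrow> bool" where
  "red \<epsilon> c S n q \<longleftrightarrow> q \<in> Qsq \<epsilon> c n \<and>
     (\<exists>m<n. \<exists>u\<in>S \<inter> Qsq \<epsilon> c m. \<exists>v\<in>S \<inter> Qsq \<epsilon> c m. u \<noteq> v \<and> coll q u v)"

definition blue_pairs :: "real \<Rightarrow> real \<Rightarrow> pt set \<Rightarrow> nat \<Rightarrow> pt set set" where
  "blue_pairs \<epsilon> c S n = {{u, v} | u v. u \<in> Qsq \<epsilon> c n \<and> v \<in> Qsq \<epsilon> c n \<and> u \<noteq> v \<and>
      (\<not> red \<epsilon> c S n u \<or> \<not> red \<epsilon> c S n v) \<and>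
      (\<exists>m<n. \<exists>w\<in>S \<inter> Qsq \<epsilon> c m. coll u v w)}"

end

theory Submission
  imports Defs "HOL-Real_Asymp.Real_Asymp"
begin

definition box :: "int \<Rightarrow> int \<Rightarrow> int \<Rightarrow> pt set" where
  "box X0 Y0 s = {(x,y). X0 \<le> x \<and> x \<le> X0+s \<and> Y0 \<le> y \<and> y \<le> Y0+s}"

definition lin :: "int \<Rightarrow> int \<Rightarrow> pt set" where
  "lin a b = {(t*a, t*b) | t. True}"

definition dirs :: "int \<Rightarrow> int \<Rightarrow> int \<Rightarrow> (int \<times> int) set" where
  "dirs X0 Y0 s = {(a,b). coprime a b \<and> 1 \<le> a \<and> a \<le> s \<and> Y0*a \<le> b*(X0+s) \<and> b*X0 \<le> (Y0+s)*a}"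

definition pairs0 :: "int \<Rightarrow> int \<Rightarrow> int \<Rightarrow> pt set set" where
  "pairs0 X0 Y0 s = {{u,v} | u v. u \<in> box X0 Y0 s \<and> v \<in> box X0 Y0 s \<and> u \<noteq> v \<and> coll u v (0,0)}"

lemma cover:
  assumes X0: "X0 > 0" and Y0: "Y0 \<ge> 0"
  shows "pairs0 X0 Y0 s \<subseteq> (\<Union>d\<in>dirs X0 Y0 s. {B. B \<subseteq> lin (fst d) (snd d) \<inter> box X0 Y0 s \<and> card B = 2})"
proof
  fix B assume "B \<in> pairs0 X0 Y0 s"
  then obtain ux uy vx vy where B: "B = {(ux,uy),(vx,vy)}" and u: "(ux,uy) \<in> box X0 Y0 s"
    and v: "(vx,vy) \<in> box X0 Y0 s" and ne: "(ux,uy) \<noteq> (vx,vy)" and co: "coll (ux,uy) (vx,vy) (0,0)"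
    unfolding pairs0_def by auto
  from u have ux: "X0 \<le> ux" "ux \<le> X0+s" and uy: "Y0 \<le> uy" "uy \<le> Y0+s" by (auto simp: box_def)
  from v have vx: "X0 \<le> vx" "vx \<le> X0+s" and vy: "Y0 \<le> vy" "vy \<le> Y0+s" by (auto simp: box_def)
  from co have cr: "vx*uy = ux*vy" by (simp add: coll_def algebra_simps)
  define g where "g = gcd ux uy"
  have gpos: "g > 0" using X0 ux by (simp add: g_def)
  define a where "a = ux div g"
  define b where "b = uy div g"
  have uxe: "ux = g*a" by (simp add: a_def g_def)
  have uye: "uy = g*b" by (simp add: b_def g_def)
  have cop: "coprime a b" unfolding a_def b_def g_def using X0 ux by (intro div_gcd_coprime) auto
  have apos: "a \<ge> 1" using uxe gpos X0 ux by (smt (verit) mult_le_0_iff)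
  have "vx*b = a*vy" using cr uxe uye gpos by (metis mult.left_commute mult_cancel_left less_irrefl mult.commute)
  hence "a dvd vx*b" by simp
  hence "a dvd vx" using cop by (simp add: coprime_dvd_mult_left_iff)
  then obtain t where vxe: "vx = a*t" by auto
  have vye: "vy = t*b" using \<open>vx*b = a*vy\<close> vxe apos by (simp add: algebra_simps)
  have "g \<noteq> t" using ne uxe uye vxe vye by auto
  hence "\<bar>g - t\<bar> \<ge> 1" by linarith
  have "\<bar>ux - vx\<bar> \<le> s" using ux vx by linarith
  moreover have "ux - vx = (g - t) * a" using uxe vxe by (simp add: algebra_simps)
  hence "\<bar>ux - vx\<bar> = \<bar>g - t\<bar> * a" using apos by (simp add: abs_mult)
  ultimately have "a \<le> s" using \<open>\<bar>g - t\<bar> \<ge> 1\<close> apos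
    by (smt (verit) mult_le_cancel_right1)
  have "Y0*ux \<le> uy*(X0+s)" using ux uy Y0 X0 by (intro mult_mono) auto
  hence "g*(Y0*a) \<le> g*(b*(X0+s))" using uxe uye by (simp add: algebra_simps)
  hence d1: "Y0*a \<le> b*(X0+s)" using gpos by simp
  have "uy*X0 \<le> (Y0+s)*ux" using ux uy Y0 X0 by (intro mult_mono) auto
  hence "g*(b*X0) \<le> g*((Y0+s)*a)" using uxe uye by (simp add: algebra_simps)
  hence d2: "b*X0 \<le> (Y0+s)*a" using gpos by simp
  have dd: "(a,b) \<in> dirs X0 Y0 s" using cop apos \<open>a \<le> s\<close> d1 d2 by (simp add: dirs_def)
  have "(ux,uy) \<in> lin a b" unfolding lin_def using uxe uye by (auto simp: mult.commute)
  moreover have "(vx,vy) \<in> lin a b" unfolding lin_def using vxe vye by (auto simp: mult.commute)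
  ultimately have "B \<subseteq> lin a b \<inter> box X0 Y0 s" using B u v by auto
  moreover have "card B = 2" using B ne by simp
  ultimately show "B \<in> (\<Union>d\<in>dirs X0 Y0 s. {B. B \<subseteq> lin (fst d) (snd d) \<inter> box X0 Y0 s \<and> card B = 2})"
    using dd by force
qed

lemma card_int_interval:
  fixes lo hi :: real
  assumes "lo \<le> hi + 1"
  shows "real (card {t::int. lo \<le> real_of_int t \<and> real_of_int t \<le> hi}) \<le> hi - lo + 1"
proof -
  have eq: "{t::int. lo \<le> real_of_int t \<and> real_of_int t \<le> hi} = {\<lceil>lo\<rceil>..\<lfloor>hi\<rfloor>}"
    by (auto simp: ceiling_le_iff le_floor_iff)
  show ?thesis
  proof (cases "\<lceil>lo\<rceil> \<le> \<lfloor>hi\<rfloor>")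
    case True
    have "real (card {\<lceil>lo\<rceil>..\<lfloor>hi\<rfloor>}) = real_of_int (\<lfloor>hi\<rfloor> - \<lceil>lo\<rceil> + 1)" using True by simp
    also have "\<dots> \<le> hi - lo + 1" 
      by (smt (verit) of_int_floor_le le_of_int_ceiling of_int_add of_int_diff of_int_1)
    finally show ?thesis using eq by simp
  next
    case False
    hence E: "{t::int. lo \<le> real_of_int t \<and> real_of_int t \<le> hi} = {}" using eq by auto
    show ?thesis by (subst E) (use assms in simp)
  qed
qed

lemma card_line:
  assumes a: "a \<ge> 1" and s: "s \<ge> 0"
  shows "real (card (lin a b \<inter> box X0 Y0 s)) \<le> real_of_int s / real_of_int a + 1"
proof -
  let ?T = "{t::int. real_of_int X0 / a \<le> real_of_int t \<and> real_of_int t \<le> real_of_int (X0+s) / a}"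
  have ap: "real_of_int a > 0" using a by simp
  have sub: "lin a b \<inter> box X0 Y0 s \<subseteq> (\<lambda>t. (t*a, t*b)) ` ?T"
  proof
    fix p assume "p \<in> lin a b \<inter> box X0 Y0 s"
    then obtain t where p: "p = (t*a, t*b)" and "X0 \<le> t*a" "t*a \<le> X0+s"
      by (auto simp: lin_def box_def)
    hence "real_of_int X0 \<le> real_of_int t * a" "real_of_int t * a \<le> real_of_int (X0+s)"
      by (metis of_int_le_iff of_int_mult)+
    hence "t \<in> ?T" using ap by (simp add: pos_divide_le_eq pos_le_divide_eq del: of_int_add)
    thus "p \<in> (\<lambda>t. (t*a, t*b)) ` ?T" using p by auto
  qed
  have fin: "finite ?T"
  proof -
    have "?T \<subseteq> {\<lceil>real_of_int X0 / a\<rceil>..\<lfloor>real_of_int (X0+s) / a\<rfloor>}"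
      by (auto simp: ceiling_le_iff le_floor_iff)
    thus ?thesis using finite_subset by blast
  qed
  have "card (lin a b \<inter> box X0 Y0 s) \<le> card ((\<lambda>t. (t*a, t*b)) ` ?T)"
    using sub fin by (intro card_mono) auto
  also have "\<dots> \<le> card ?T" by (rule card_image_le[OF fin])
  finally have "real (card (lin a b \<inter> box X0 Y0 s)) \<le> real (card ?T)" by simp
  also have "\<dots> \<le> real_of_int (X0+s) / a - real_of_int X0 / a + 1"
  proof (intro card_int_interval)
    have "real_of_int X0 / a \<le> real_of_int (X0+s)/a" using s ap by (intro divide_right_mono) auto
    thus "real_of_int X0 / a \<le> real_of_int (X0+s)/a + 1" by linarith
  qed
  also have "\<dots> = real_of_int s / a + 1" by (simp add: diff_divide_distrib[symmetric])
  finally show ?thesis .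
qed

lemma choose2_real: "real (K choose 2) = real K * (real K - 1) / 2"
proof (induction K)
  case 0 then show ?case by simp
next
  case (Suc K)
  have "Suc K choose 2 = (K choose 1) + (K choose 2)" using binomial_Suc_Suc[of K 1] by (simp add: numeral_2_eq_2)
  then show ?case using Suc by (simp add: algebra_simps)
qed

lemma choose2_le:
  assumes "real K \<le> x" "x \<ge> 1"
  shows "real (K choose 2) \<le> x * (x - 1) / 2"
proof -
  have "real K * (real K - 1) \<le> x * (x - 1)"
  proof (cases "K = 0")
    case True then show ?thesis using assms by simp
  next
    case False
    hence "real K \<ge> 1" by simp
    have "real K * (real K - 1) \<le> x * (real K - 1)" using assms \<open>real K \<ge> 1\<close> by (intro mult_right_mono) auto
    also have "\<dots> \<le> x * (x - 1)" using assms by (intro mult_left_mono) auto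
    finally show ?thesis .
  qed
  thus ?thesis by (simp add: choose2_real divide_right_mono)
qed

lemma tail_sq_aux:
  fixes k :: int assumes "k \<ge> 1"
  shows "(\<Sum>a\<in>{k+1..k+int m}. 1 / (real_of_int a)^2) \<le> 1/real_of_int k - 1/real_of_int (k + int m)"
proof (induction m)
  case 0 then show ?case by simp
next
  case (Suc m)
  have eq: "{k+1..k+int (Suc m)} = insert (k+int m+1) {k+1..k+int m}" by auto
  have "1 / (real_of_int (k+int m+1))^2 \<le> 1/real_of_int (k+int m) - 1/real_of_int (k+int m+1)"
  proof -
    define x where "x = real_of_int (k + int m)"
    have x: "x \<ge> 1" using assms by (simp add: x_def)
    have e: "1/x - 1/(x+1) = 1/(x*(x+1))" using x by (simp add: field_simps)
    have "x*(x+1) \<le> (x+1)^2" using x by (simp add: power2_eq_square)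
    hence "1/(x+1)^2 \<le> 1/(x*(x+1))" using x by (intro divide_left_mono) auto
    hence "1/(x+1)^2 \<le> 1/x - 1/(x+1)" using e by simp
    thus ?thesis by (simp add: x_def)
  qed
  hence h2: "1 / (real_of_int (k+int m+1))^2 \<le> 1/real_of_int (k+int m) - 1/real_of_int (k+int m+1)" .
  have "(\<Sum>a\<in>{k+1..k+int (Suc m)}. 1 / (real_of_int a)^2) = 1 / (real_of_int (k+int m+1))^2 + (\<Sum>a\<in>{k+1..k+int m}. 1 / (real_of_int a)^2)"
    by (subst eq, subst sum.insert) auto
  also have "\<dots> \<le> 1/real_of_int k - 1/real_of_int (k+int m+1)" using h2 Suc by linarith
  also have "real_of_int (k+int m+1) = real_of_int (k + int (Suc m))" by simp
  finally show ?case .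
qed

lemma tail_sq:
  fixes k s :: int assumes "k \<ge> 1"
  shows "(\<Sum>a\<in>{k+1..s}. 1 / (real_of_int a)^2) \<le> 1/real_of_int k"
proof (cases "s \<le> k")
  case True then show ?thesis using assms by simp
next
  case False
  then obtain m where "s = k + int m" by (metis le_iff_add linorder_linear zle_iff_zadd)
  hence "(\<Sum>a\<in>{k+1..s}. 1 / (real_of_int a)^2) \<le> 1/real_of_int k - 1/real_of_int (k + int m)"
    using tail_sq_aux[OF assms, of m] by simp
  moreover have "1/real_of_int (k + int m) \<ge> 0" using assms by simp
  ultimately show ?thesis by linarith
qed

definition FF :: "int \<Rightarrow> real \<Rightarrow> real" where
  "FF s x = (real_of_int s / x + 1) * (real_of_int s / x) / 2"

lemma FF_nonneg: "s \<ge> 0 \<Longrightarrow> x > 0 \<Longrightarrow> FF s x \<ge> 0"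
  by (simp add: FF_def)

lemma FF_anti: "s \<ge> 0 \<Longrightarrow> 0 < x \<Longrightarrow> x \<le> y \<Longrightarrow> FF s y \<le> FF s x"
proof -
  assume a: "s \<ge> 0" "0 < x" "x \<le> y"
  have h: "real_of_int s / y \<le> real_of_int s / x" using a by (intro divide_left_mono) auto
  have "real_of_int s / y \<ge> 0" using a by simp
  hence "(real_of_int s / y + 1) * (real_of_int s / y) \<le> (real_of_int s / x + 1) * (real_of_int s / x)"
    using h by (intro mult_mono) auto
  thus ?thesis unfolding FF_def by (intro divide_right_mono) auto
qed

lemma dirs_finite: "X0 > 0 \<Longrightarrow> Y0 \<ge> 0 \<Longrightarrow> s \<ge> 0 \<Longrightarrow> finite (dirs X0 Y0 s)"
proof -
  assume X0: "X0 > 0" and Y0: "Y0 \<ge> 0" and s: "s \<ge> 0"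
  have "dirs X0 Y0 s \<subseteq> {1..s} \<times> {0..(Y0+s)*s}"
  proof
    fix d assume "d \<in> dirs X0 Y0 s"
    then obtain a b where d: "d = (a,b)" "1 \<le> a" "a \<le> s" "b*X0 \<le> (Y0+s)*a" "Y0*a \<le> b*(X0+s)"
      by (auto simp: dirs_def)
    have "0 \<le> Y0*a" using Y0 d by simp
    hence "0 \<le> b*(X0+s)" using d by linarith
    hence b0: "b \<ge> 0" using X0 s by (simp add: zero_le_mult_iff)
    have "b*1 \<le> b*X0" using b0 X0 by (intro mult_left_mono) auto
    moreover have "(Y0+s)*a \<le> (Y0+s)*s" using d Y0 s by (intro mult_left_mono) auto
    ultimately have "b \<le> (Y0+s)*s" using d by linarith
    thus "d \<in> {1..s} \<times> {0..(Y0+s)*s}" using d b0 by auto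
  qed
  thus ?thesis by (rule finite_subset) auto
qed

lemma box_finite: "finite (box X0 Y0 s)"
proof -
  have "box X0 Y0 s \<subseteq> {X0..X0+s} \<times> {Y0..Y0+s}" by (auto simp: box_def)
  thus ?thesis by (rule finite_subset) auto
qed

lemma cross_le: "0 < (q::real) \<Longrightarrow> 0 < d \<Longrightarrow> (p/q \<le> c/d) = (p*d \<le> c*q)"
  by (simp add: field_simps)

lemma lin_helper: "(L::real) \<le> (A + B + C + D)/2 \<Longrightarrow> A \<le> A' \<Longrightarrow> B \<le> B' \<Longrightarrow> C \<le> C' \<Longrightarrow> D \<le> D' \<Longrightarrow> L \<le> (A' + B' + C' + D')/2"
proof -
  assume a: "(L::real) \<le> (A + B + C + D)/2" "A \<le> A'" "B \<le> B'" "C \<le> C'" "D \<le> D'"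
  have "(A + B + C + D)/2 \<le> (A' + B' + C' + D')/2" using a by (intro divide_right_mono add_mono) auto
  thus ?thesis using a(1) by (rule order_trans[rotated])
qed

lemma pairs0_bound:
  fixes X0 Y0 s k :: int and Jb am Hb :: real
  assumes X0: "X0 > 0" and Y0: "Y0 > 0" and s: "s \<ge> 0" and k: "k \<ge> 1"
   and J: "real_of_int (Y0+s) / real_of_int X0 - real_of_int Y0 / real_of_int (X0+s) \<le> Jb"
   and kJ: "(real_of_int k)^2 * Jb < 1"
   and am: "0 < am" "am \<le> real_of_int X0 / real_of_int (Y0+s)"
   and H: "(\<Sum>a\<in>{1..s}. 1 / real_of_int a) \<le> Hb"
  shows "real (card (pairs0 X0 Y0 s)) \<le> FF s am + (Jb * (real_of_int s)^2 * (Hb+1) + (real_of_int s)^2 / real_of_int k + real_of_int s * Hb) / 2"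
proof -
  define lo where "lo = real_of_int Y0 / real_of_int (X0+s)"
  define hi where "hi = real_of_int (Y0+s) / real_of_int X0"
  have X0r: "real_of_int X0 > 0" and Xsr: "real_of_int (X0+s) > 0" and Y0r: "real_of_int Y0 > 0"
    and sr: "real_of_int s \<ge> 0" using X0 Y0 s by auto
  have lohi: "lo \<le> hi"
  proof -
    have "lo \<le> real_of_int Y0 / real_of_int X0" unfolding lo_def using X0r Y0r s
      by (intro divide_left_mono) auto
    also have "\<dots> \<le> hi" unfolding hi_def using X0r s by (intro divide_right_mono) auto
    finally show ?thesis .
  qed
  have J0: "hi - lo \<le> Jb" using J by (simp add: lo_def hi_def)
  have Jb0: "Jb \<ge> 0" using J0 lohi by linarith
  define D where "D = dirs X0 Y0 s"
  have finD: "finite D" unfolding D_def using X0 Y0 s by (intro dirs_finite) auto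
  have slope: "lo \<le> real_of_int b / real_of_int a \<and> real_of_int b / real_of_int a \<le> hi" if "(a,b) \<in> D" for a b
  proof -
    from that have a1: "a \<ge> 1" and h1: "Y0*a \<le> b*(X0+s)" and h2: "b*X0 \<le> (Y0+s)*a"
      by (auto simp: D_def dirs_def)
    have ar: "real_of_int a > 0" using a1 by simp
    have "real_of_int Y0 * real_of_int a \<le> real_of_int b * real_of_int (X0+s)"
      using h1 by (metis of_int_le_iff of_int_mult)
    hence "lo \<le> real_of_int b / real_of_int a" unfolding lo_def using cross_le[OF Xsr ar] by simp
    moreover have "real_of_int b * real_of_int X0 \<le> real_of_int (Y0+s) * real_of_int a"
      using h2 by (metis of_int_le_iff of_int_mult)
    hence "real_of_int b / real_of_int a \<le> hi" unfolding hi_def using cross_le[OF ar X0r] by simp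
    ultimately show ?thesis by simp
  qed
  have apos: "fst d \<ge> 1" if "d \<in> D" for d using that by (auto simp: D_def dirs_def)
  let ?Bs = "\<lambda>d. {B. B \<subseteq> lin (fst d) (snd d) \<inter> box X0 Y0 s \<and> card B = 2}"
  have finB: "finite (?Bs d)" for d
  proof -
    have "?Bs d \<subseteq> Pow (box X0 Y0 s)" by auto
    thus ?thesis using box_finite by (meson finite_Pow_iff finite_subset)
  qed
  have sub: "pairs0 X0 Y0 s \<subseteq> (\<Union>d\<in>D. ?Bs d)"
    using cover[OF X0 less_imp_le[OF Y0]] unfolding D_def .
  have finU: "finite (\<Union>d\<in>D. ?Bs d)" using finD finB by blast
  have "card (pairs0 X0 Y0 s) \<le> card (\<Union>d\<in>D. ?Bs d)" by (rule card_mono[OF finU sub])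
  also have "\<dots> \<le> (\<Sum>d\<in>D. card (?Bs d))" by (rule card_UN_le[OF finD])
  finally have c1: "real (card (pairs0 X0 Y0 s)) \<le> (\<Sum>d\<in>D. real (card (?Bs d)))"
    by (simp only: of_nat_sum[symmetric] of_nat_le_iff)
  have c2: "real (card (?Bs d)) \<le> FF s (real_of_int (fst d))" if "d \<in> D" for d
  proof -
    have fl: "finite (lin (fst d) (snd d) \<inter> box X0 Y0 s)" using box_finite by simp
    have "card (?Bs d) = card (lin (fst d) (snd d) \<inter> box X0 Y0 s) choose 2"
      using n_subsets[OF fl] by simp
    moreover have h1: "real (card (lin (fst d) (snd d) \<inter> box X0 Y0 s)) \<le> real_of_int s / real_of_int (fst d) + 1"
      by (rule card_line[OF apos[OF that] s])
    moreover have h2: "real_of_int s / real_of_int (fst d) + 1 \<ge> 1" using apos[OF that] s by simp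
    ultimately have "real (card (?Bs d)) \<le> (real_of_int s / real_of_int (fst d) + 1) * (real_of_int s / real_of_int (fst d) + 1 - 1) / 2"
      using choose2_le[OF h1 h2] by simp
    thus ?thesis by (simp add: FF_def)
  qed
  let ?F = "\<lambda>d. FF s (real_of_int (fst d))"
  have c3: "real (card (pairs0 X0 Y0 s)) \<le> (\<Sum>d\<in>D. ?F d)"
  proof -
    have "(\<Sum>d\<in>D. real (card (?Bs d))) \<le> (\<Sum>d\<in>D. ?F d)" by (rule sum_mono) (rule c2)
    thus ?thesis using c1 by linarith
  qed
  define D1 where "D1 = D \<inter> {d. fst d \<le> k}"
  define D2 where "D2 = D - {d. fst d \<le> k}"
  have split: "(\<Sum>d\<in>D. ?F d) = (\<Sum>d\<in>D1. ?F d) + (\<Sum>d\<in>D2. ?F d)"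
    unfolding D1_def D2_def using finD by (rule sum.Int_Diff)
  have uniq: "d = d'" if "d \<in> D1" "d' \<in> D1" for d d'
  proof -
    obtain a b where d: "d = (a,b)" by fastforce
    obtain a' b' where d': "d' = (a',b')" by fastforce
    have dD: "(a,b) \<in> D" and d'D: "(a',b') \<in> D" and ak: "a \<le> k" and a'k: "a' \<le> k"
      using that d d' by (auto simp: D1_def)
    have a1: "a \<ge> 1" and a'1: "a' \<ge> 1" using apos[OF dD] apos[OF d'D] by auto
    have cop: "coprime a b" "coprime a' b'" using dD d'D by (auto simp: D_def dirs_def)
    have cross: "b*a' = b'*a"
    proof (rule ccontr)
      assume ne: "b*a' \<noteq> b'*a"
      hence ge1: "\<bar>b*a' - b'*a\<bar> \<ge> 1" by linarith
      have ar: "real_of_int a > 0" "real_of_int a' > 0" using a1 a'1 by auto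
      have "\<bar>real_of_int b / a - real_of_int b' / a'\<bar> = \<bar>real_of_int (b*a' - b'*a)\<bar> / (real_of_int a * a')"
      proof -
        have "real_of_int b / a - real_of_int b' / a' = real_of_int (b*a' - b'*a) / (real_of_int a * a')"
          using ar by (simp add: field_simps)
        thus ?thesis using ar by (simp add: abs_divide abs_mult)
      qed
      also have "\<dots> \<ge> 1 / (real_of_int a * a')"
        using ge1 ar by (intro divide_right_mono) (auto simp del: of_int_diff)
      finally have f1: "1 / (real_of_int a * a') \<le> \<bar>real_of_int b / a - real_of_int b' / a'\<bar>" .
      have "\<bar>real_of_int b / a - real_of_int b' / a'\<bar> \<le> hi - lo"
        using slope[OF dD] slope[OF d'D] by linarith
      hence "1 / (real_of_int a * a') \<le> Jb" using f1 J0 by linarith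
      moreover have "real_of_int a * a' \<le> (real_of_int k)^2"
        using ak a'k ar by (simp add: power2_eq_square mult_mono)
      ultimately have "1 \<le> (real_of_int k)^2 * Jb"
      proof -
        assume A1: "1 / (real_of_int a * a') \<le> Jb" and A2: "real_of_int a * a' \<le> (real_of_int k)^2"
        have pp: "real_of_int a * a' > 0" using ar by simp
        have "1 = (real_of_int a * a') * (1 / (real_of_int a * a'))" using a1 a'1 by simp
        also have "\<dots> \<le> (real_of_int a * a') * Jb" using A1 pp by (intro mult_left_mono) auto
        also have "\<dots> \<le> (real_of_int k)^2 * Jb" using A2 Jb0 by (intro mult_right_mono) auto
        finally show ?thesis .
      qed
      thus False using kJ by simp
    qed
    have "a dvd b*a'" using cross by simp
    hence "a dvd a'" using cop(1) by (simp add: coprime_dvd_mult_right_iff)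
    moreover have "a' dvd b'*a" using cross by (metis dvd_triv_right)
    hence "a' dvd a" using cop(2) by (simp add: coprime_dvd_mult_right_iff)
    ultimately have "a = a'" using a1 a'1 by (simp add: zdvd_antisym_nonneg)
    hence "b = b'" using cross a1 by simp
    thus ?thesis using d d' \<open>a = a'\<close> by simp
  qed
  have amle: "am \<le> real_of_int (fst d)" if "d \<in> D" for d
  proof -
    obtain a b where d: "d = (a,b)" by fastforce
    from that d have a1: "a \<ge> 1" and h1: "Y0*a \<le> b*(X0+s)" and h2: "b*X0 \<le> (Y0+s)*a"
      by (auto simp: D_def dirs_def)
    have "0 < Y0*a" using Y0 a1 by simp
    hence "0 < b*(X0+s)" using h1 by linarith
    hence "b \<ge> 1" using X0 s by (simp add: zero_less_mult_iff)
    hence "X0 \<le> b*X0" using X0 by simp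
    hence "X0 \<le> (Y0+s)*a" using h2 by linarith
    hence "real_of_int X0 \<le> real_of_int (Y0+s) * real_of_int a" by (metis of_int_le_iff of_int_mult)
    hence "real_of_int X0 / real_of_int (Y0+s) \<le> real_of_int a" using Y0 s
      by (simp add: divide_le_eq mult.commute)
    thus ?thesis using am d by simp
  qed
  have s4: "(\<Sum>d\<in>D1. ?F d) \<le> FF s am"
  proof (cases "D1 = {}")
    case True then show ?thesis using FF_nonneg[OF s am(1)] by simp
  next
    case False
    then obtain d where dD1: "d \<in> D1" by auto
    hence "D1 = {d}" using uniq by blast
    moreover have "?F d \<le> FF s am" using dD1 amle am s by (intro FF_anti) (auto simp: D1_def)
    ultimately show ?thesis by simp
  qed
  define Bs where "Bs = (\<lambda>a. {b. Y0*a \<le> b*(X0+s) \<and> b*X0 \<le> (Y0+s)*a})"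
  have Bs_eq: "Bs a = {b. lo * real_of_int a \<le> real_of_int b \<and> real_of_int b \<le> hi * real_of_int a}" if "a \<ge> 1" for a
  proof -
    have ar: "real_of_int a > 0" using that by simp
    have "Y0*a \<le> b*(X0+s) \<longleftrightarrow> lo * real_of_int a \<le> real_of_int b" for b
    proof -
      have "Y0*a \<le> b*(X0+s) \<longleftrightarrow> real_of_int Y0 * real_of_int a \<le> real_of_int b * real_of_int (X0+s)"
        by (metis of_int_le_iff of_int_mult)
      also have "\<dots> \<longleftrightarrow> (real_of_int Y0 * real_of_int a) / real_of_int (X0+s) \<le> real_of_int b"
        by (rule pos_divide_le_eq[OF Xsr, symmetric])
      also have "(real_of_int Y0 * real_of_int a) / real_of_int (X0+s) = lo * real_of_int a"
        unfolding lo_def by simp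
      finally show ?thesis .
    qed
    moreover have "b*X0 \<le> (Y0+s)*a \<longleftrightarrow> real_of_int b \<le> hi * real_of_int a" for b
    proof -
      have "b*X0 \<le> (Y0+s)*a \<longleftrightarrow> real_of_int b * real_of_int X0 \<le> real_of_int (Y0+s) * real_of_int a"
        by (metis of_int_le_iff of_int_mult)
      also have "\<dots> \<longleftrightarrow> real_of_int b \<le> (real_of_int (Y0+s) * real_of_int a) / real_of_int X0"
        by (rule pos_le_divide_eq[OF X0r, symmetric])
      also have "(real_of_int (Y0+s) * real_of_int a) / real_of_int X0 = hi * real_of_int a"
        unfolding hi_def by simp
      finally show ?thesis .
    qed
    ultimately show ?thesis unfolding Bs_def by auto
  qed
  have cardBs: "real (card (Bs a)) \<le> real_of_int a * Jb + 1" if "a \<ge> 1" for a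
  proof -
    have ar: "real_of_int a > 0" using that by simp
    have "lo * real_of_int a \<le> hi * real_of_int a" using lohi ar by (intro mult_right_mono) auto
    hence "real (card (Bs a)) \<le> hi * real_of_int a - lo * real_of_int a + 1"
      unfolding Bs_eq[OF that] by (intro card_int_interval) auto
    also have "\<dots> = real_of_int a * (hi - lo) + 1" by (simp add: algebra_simps)
    also have "\<dots> \<le> real_of_int a * Jb + 1" using J0 ar by (simp add: mult_left_mono)
    finally show ?thesis .
  qed
  have finBs: "finite (Bs a)" if "a \<ge> 1" for a
  proof -
    have "Bs a \<subseteq> {\<lceil>lo * real_of_int a\<rceil>..\<lfloor>hi * real_of_int a\<rfloor>}"
      unfolding Bs_eq[OF that] by (auto simp: ceiling_le_iff le_floor_iff)
    thus ?thesis by (rule finite_subset) auto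
  qed
  have finSig: "finite (Sigma {k+1..s} Bs)" using finBs k by (intro finite_SigmaI) auto
  have D2sub: "D2 \<subseteq> Sigma {k+1..s} Bs"
  proof
    fix d assume "d \<in> D2"
    then obtain a b where d: "d = (a,b)" and "(a,b) \<in> dirs X0 Y0 s" and "\<not> a \<le> k"
      unfolding D2_def D_def by (cases d) auto
    thus "d \<in> Sigma {k+1..s} Bs" unfolding dirs_def Bs_def by auto
  qed
  have nn: "0 \<le> ?F d" if "d \<in> Sigma {k+1..s} Bs - D2" for d
  proof -
    have "fst d \<ge> k+1" using that by auto
    hence "real_of_int (fst d) > 0" using k by simp
    thus ?thesis using FF_nonneg[OF s] by blast
  qed
  have "(\<Sum>d\<in>D2. ?F d) \<le> (\<Sum>d\<in>Sigma {k+1..s} Bs. ?F d)"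
    by (rule sum_mono2[OF finSig D2sub nn])
  also have "\<dots> = (\<Sum>a\<in>{k+1..s}. \<Sum>b\<in>Bs a. FF s (real_of_int a))"
    using finBs k by (subst sum.Sigma) (auto simp: split_def)
  also have "\<dots> = (\<Sum>a\<in>{k+1..s}. real (card (Bs a)) * FF s (real_of_int a))" by simp
  also have "\<dots> \<le> (\<Sum>a\<in>{k+1..s}. (real_of_int a * Jb + 1) * FF s (real_of_int a))"
    using cardBs k FF_nonneg s by (intro sum_mono mult_right_mono) auto
  also have "\<dots> = (\<Sum>a\<in>{k+1..s}. (Jb * (real_of_int s)^2 * (1 / real_of_int a) + Jb * real_of_int s
       + (real_of_int s)^2 * (1 / (real_of_int a)^2) + real_of_int s * (1 / real_of_int a)) / 2)"
  proof (intro sum.cong refl)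
    fix a assume "a \<in> {k+1..s}"
    hence ar: "real_of_int a > 0" using k by simp
    show "(real_of_int a * Jb + 1) * FF s (real_of_int a) = (Jb * (real_of_int s)^2 * (1 / real_of_int a) + Jb * real_of_int s
       + (real_of_int s)^2 * (1 / (real_of_int a)^2) + real_of_int s * (1 / real_of_int a)) / 2"
      using ar unfolding FF_def by (simp add: field_simps power2_eq_square)
  qed
  also have "\<dots> = (Jb * (real_of_int s)^2 * (\<Sum>a\<in>{k+1..s}. 1 / real_of_int a) + (\<Sum>a\<in>{k+1..s}. Jb * real_of_int s)
       + (real_of_int s)^2 * (\<Sum>a\<in>{k+1..s}. 1 / (real_of_int a)^2) + real_of_int s * (\<Sum>a\<in>{k+1..s}. 1 / real_of_int a)) / 2"
    by (simp add: sum_divide_distrib[symmetric] sum.distrib sum_distrib_left)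
  finally have s5: "(\<Sum>d\<in>D2. ?F d) \<le> (Jb * (real_of_int s)^2 * (\<Sum>a\<in>{k+1..s}. 1 / real_of_int a) + (\<Sum>a\<in>{k+1..s}. Jb * real_of_int s)
       + (real_of_int s)^2 * (\<Sum>a\<in>{k+1..s}. 1 / (real_of_int a)^2) + real_of_int s * (\<Sum>a\<in>{k+1..s}. 1 / real_of_int a)) / 2" .
  have h1: "(\<Sum>a\<in>{k+1..s}. 1 / real_of_int a) \<le> Hb"
  proof -
    have "(\<Sum>a\<in>{k+1..s}. 1 / real_of_int a) \<le> (\<Sum>a\<in>{1..s}. 1 / real_of_int a)"
      using k by (intro sum_mono2) auto
    thus ?thesis using H by linarith
  qed
  have h2: "(\<Sum>a\<in>{k+1..s}. Jb * real_of_int s) \<le> Jb * (real_of_int s)^2"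
  proof -
    have "card {k+1..s} \<le> nat s" using k by simp
    hence "real (card {k+1..s}) \<le> real_of_int s" using s by linarith
    hence "real (card {k+1..s}) * (Jb * real_of_int s) \<le> real_of_int s * (Jb * real_of_int s)"
      using Jb0 s by (intro mult_right_mono) auto
    thus ?thesis by (simp add: power2_eq_square mult_ac)
  qed
  have h3: "(\<Sum>a\<in>{k+1..s}. 1 / (real_of_int a)^2) \<le> 1 / real_of_int k" by (rule tail_sq[OF k])
  have "Jb * (real_of_int s)^2 * (\<Sum>a\<in>{k+1..s}. 1 / real_of_int a) \<le> Jb * (real_of_int s)^2 * Hb"
    using h1 Jb0 by (intro mult_left_mono) auto
  moreover have "(real_of_int s)^2 * (\<Sum>a\<in>{k+1..s}. 1 / (real_of_int a)^2) \<le> (real_of_int s)^2 / real_of_int k"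
    using h3 mult_left_mono[OF h3, of "(real_of_int s)^2"] by simp
  moreover have "real_of_int s * (\<Sum>a\<in>{k+1..s}. 1 / real_of_int a) \<le> real_of_int s * Hb"
    using h1 s by (intro mult_left_mono) auto
  ultimately have s6': "(\<Sum>d\<in>D2. ?F d) \<le> (Jb * (real_of_int s)^2 * Hb + Jb * (real_of_int s)^2 + (real_of_int s)^2 / real_of_int k + real_of_int s * Hb) / 2"
    using lin_helper[OF s5 _ h2] by blast
  have e: "Jb * (real_of_int s)^2 * (Hb+1) = Jb * (real_of_int s)^2 * Hb + Jb * (real_of_int s)^2" by (simp add: algebra_simps)
  have s6: "(\<Sum>d\<in>D2. ?F d) \<le> (Jb * (real_of_int s)^2 * (Hb+1) + (real_of_int s)^2 / real_of_int k + real_of_int s * Hb) / 2"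
    using s6' unfolding e .
  show ?thesis using c3 split s4 s6 by linarith
qed

definition sig :: "real \<Rightarrow> real \<Rightarrow> nat \<Rightarrow> real" where
  "sig \<epsilon> c n = 2^n / (c * real n powr (1+\<epsilon>))"

lemma ratio_le: "(x::real) / t < 1 \<Longrightarrow> 0 < t \<Longrightarrow> x \<le> t"
  by (simp add: divide_less_eq)

lemma asym1:
  assumes "0 < \<epsilon>" "\<epsilon> < 1" "0 < c"
  shows "eventually (\<lambda>n. 2^n / real n powr \<epsilon> / 4 - 1 - sig \<epsilon> c n > 0) sequentially"
  using assms unfolding sig_def by real_asymp

lemma asym2:
  assumes "0 < \<epsilon>" "\<epsilon> < 1" "0 < c"
  shows "eventually (\<lambda>n. 32 / real n powr ((1-\<epsilon>)/2) < c \<and> 1 + 4 / real n powr \<epsilon> \<le> 2) sequentially"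
proof -
  have "eventually (\<lambda>n. 32 / real n powr ((1-\<epsilon>)/2) < c) sequentially" using assms by real_asymp
  moreover have "eventually (\<lambda>n. 1 + 4 / real n powr \<epsilon> \<le> 2) sequentially" using assms by real_asymp
  ultimately show ?thesis by (rule eventually_conj)
qed

lemma asym5:
  assumes "0 < \<epsilon>" "\<epsilon> < 1" "0 < c"
  shows "eventually (\<lambda>n. sig \<epsilon> c n \<ge> 4) sequentially"
  using assms unfolding sig_def by real_asymp

lemma asym6:
  assumes "0 < \<epsilon>" "\<epsilon> < 1" "0 < c"
  shows "eventually (\<lambda>n. 2^n / 2 / (real n - 1) powr \<epsilon> \<le> 3/4 * (2^n / real n powr \<epsilon>)) sequentially"
  using assms by real_asymp

lemma asym4:
  assumes "0 < \<epsilon>" "\<epsilon> < 1" "0 < c"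
  shows "eventually (\<lambda>n. 
  2*sig \<epsilon> c n*((sig \<epsilon> c n/(real n powr \<epsilon>/4)+1)*(sig \<epsilon> c n/(real n powr \<epsilon>/4))/2
     + ((4 * sig \<epsilon> c n / 2^n * (1 + 4 / real n powr \<epsilon>))*(sig \<epsilon> c n)^2*((1 + real n)+1) + (sig \<epsilon> c n)^2/real n powr ((1+3*\<epsilon>)/4) + sig \<epsilon> c n*(1 + real n))/2)
   \<le> 8*2^(3*n)/(c^4*real n powr (3+4*\<epsilon>))) sequentially"
proof -
  have lim: "((\<lambda>n::nat. 
  (2*sig \<epsilon> c n*((sig \<epsilon> c n/(real n powr \<epsilon>/4)+1)*(sig \<epsilon> c n/(real n powr \<epsilon>/4))/2
     + ((4 * sig \<epsilon> c n / 2^n * (1 + 4 / real n powr \<epsilon>))*(sig \<epsilon> c n)^2*((1 + real n)+1) + (sig \<epsilon> c n)^2/real n powr ((1+3*\<epsilon>)/4) + sig \<epsilon> c n*(1 + real n))/2))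
   / (8*2^(3*n)/(c^4*real n powr (3+4*\<epsilon>)))) \<longlongrightarrow> 1/2) sequentially"
  proof -
    have cne: "c \<noteq> 0" using assms by simp
    have e: "inverse c * (inverse c * (c ^ 4 * (inverse c)\<^sup>2)) / 2 = 1/2"
      using cne by (simp add: field_simps eval_nat_numeral)
    have "((\<lambda>n::nat. 
  (2*sig \<epsilon> c n*((sig \<epsilon> c n/(real n powr \<epsilon>/4)+1)*(sig \<epsilon> c n/(real n powr \<epsilon>/4))/2
     + ((4 * sig \<epsilon> c n / 2^n * (1 + 4 / real n powr \<epsilon>))*(sig \<epsilon> c n)^2*((1 + real n)+1) + (sig \<epsilon> c n)^2/real n powr ((1+3*\<epsilon>)/4) + sig \<epsilon> c n*(1 + real n))/2))
   / (8*2^(3*n)/(c^4*real n powr (3+4*\<epsilon>)))) \<longlongrightarrow> inverse c * (inverse c * (c ^ 4 * (inverse c)\<^sup>2)) / 2) sequentially"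
      using assms unfolding sig_def by real_asymp
    thus ?thesis unfolding e .
  qed
  have "eventually (\<lambda>n. (2*sig \<epsilon> c n*((sig \<epsilon> c n/(real n powr \<epsilon>/4)+1)*(sig \<epsilon> c n/(real n powr \<epsilon>/4))/2
     + ((4 * sig \<epsilon> c n / 2^n * (1 + 4 / real n powr \<epsilon>))*(sig \<epsilon> c n)^2*((1 + real n)+1) + (sig \<epsilon> c n)^2/real n powr ((1+3*\<epsilon>)/4) + sig \<epsilon> c n*(1 + real n))/2))
   / (8*2^(3*n)/(c^4*real n powr (3+4*\<epsilon>))) < 1) sequentially"
    by (rule order_tendstoD(2)[OF lim]) simp
  moreover have "eventually (\<lambda>n. 8*2^(3*n)/(c^4*real n powr (3+4*\<epsilon>)) > (0::real)) sequentially"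
    using assms by real_asymp
  ultimately show ?thesis
    by eventually_elim (erule ratio_le)
qed

lemma sig_nonneg: "c > 0 \<Longrightarrow> sig \<epsilon> c k \<ge> 0"
  unfolding sig_def by simp

lemma side_facts:
  assumes e: "0 < \<epsilon>" and c: "c \<ge> 12"
  shows "0 \<le> side \<epsilon> c k" "real_of_int (side \<epsilon> c k) \<le> sig \<epsilon> c k" "12 * side \<epsilon> c k \<le> 2^k"
proof -
  have sg: "sig \<epsilon> c k \<ge> 0" using c by (intro sig_nonneg) auto
  have sd: "side \<epsilon> c k = \<lfloor>sig \<epsilon> c k\<rfloor>" by (simp add: side_def sig_def)
  show "0 \<le> side \<epsilon> c k" using sg sd by simp
  show le: "real_of_int (side \<epsilon> c k) \<le> sig \<epsilon> c k" using sd by simp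
  have "sig \<epsilon> c k \<le> 2^k / 12"
  proof (cases "k = 0")
    case True then show ?thesis by (simp add: sig_def)
  next
    case False
    hence "real k powr (1+\<epsilon>) \<ge> 1" using e by (intro ge_one_powr_ge_zero) auto
    hence "c * real k powr (1+\<epsilon>) \<ge> 12 * 1" using c by (intro mult_mono) auto
    thus ?thesis unfolding sig_def by (intro divide_left_mono) auto
  qed
  hence "12 * real_of_int (side \<epsilon> c k) \<le> 2^k" using le by linarith
  hence "real_of_int (12 * side \<epsilon> c k) \<le> real_of_int (2^k)" by simp
  thus "12 * side \<epsilon> c k \<le> 2^k" by (simp only: of_int_le_iff)
qed

lemma Ytop_facts:
  assumes e: "0 < \<epsilon>" and c: "c \<ge> 12"
  shows "real_of_int (Ytop \<epsilon> k) \<le> 2^k / real k powr \<epsilon>"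
        "real_of_int (Ytop \<epsilon> k) \<ge> 2^k / real k powr \<epsilon> - 1"
        "side \<epsilon> c k \<le> Ytop \<epsilon> k"
proof -
  show "real_of_int (Ytop \<epsilon> k) \<le> 2^k / real k powr \<epsilon>" by (simp add: Ytop_def)
  show "real_of_int (Ytop \<epsilon> k) \<ge> 2^k / real k powr \<epsilon> - 1" unfolding Ytop_def by linarith
  have "2^k / (c * real k powr (1+\<epsilon>)) \<le> 2^k / real k powr \<epsilon>"
  proof (cases "k = 0")
    case True then show ?thesis by simp
  next
    case False
    have kp: "real k powr \<epsilon> > 0" using False by simp
    have "real k powr (1+\<epsilon>) = real k * real k powr \<epsilon>" using False by (simp add: powr_add)
    moreover have "c * real k \<ge> 1"
    proof -
      have "real k \<ge> 1" using False by simp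
      hence "c * real k \<ge> 12 * 1" using c by (intro mult_mono) auto
      thus ?thesis by simp
    qed
    ultimately have "c * real k powr (1+\<epsilon>) \<ge> real k powr \<epsilon>"
    proof -
      assume h1: "real k powr (1+\<epsilon>) = real k * real k powr \<epsilon>" and h2: "c * real k \<ge> 1"
      have "c * real k powr (1+\<epsilon>) = (c * real k) * real k powr \<epsilon>" using h1 by simp
      also have "\<dots> \<ge> 1 * real k powr \<epsilon>" using h2 kp by (intro mult_right_mono) auto
      finally show ?thesis by simp
    qed
    moreover have cp: "c * real k powr (1+\<epsilon>) > 0" using c False by simp
    moreover have "0 < (c * real k powr (1+\<epsilon>)) * real k powr \<epsilon>" using mult_pos_pos[OF cp kp] .
    ultimately show ?thesis by (intro divide_left_mono) auto
  qed
  thus "side \<epsilon> c k \<le> Ytop \<epsilon> k" unfolding side_def Ytop_def by (intro floor_mono)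
qed

lemma Q_disj:
  assumes e: "0 < \<epsilon>" and c: "c \<ge> 12" and km: "k < m"
  shows "Qsq \<epsilon> c k \<inter> Qsq \<epsilon> c m = {}"
proof -
  have "12 * side \<epsilon> c k \<le> 2^k" by (rule side_facts(3)[OF e c])
  moreover have "side \<epsilon> c k \<ge> 0" by (rule side_facts(1)[OF e c])
  moreover have "(0::int) < 2^k" by simp
  ultimately have "side \<epsilon> c k < 2^k" by linarith
  moreover have "(2::int)^(k+1) = 2^k + 2^k" by simp
  ultimately have "2^k + side \<epsilon> c k < (2::int)^(k+1)" by linarith
  also have "(2::int)^(k+1) \<le> 2^m" using km by (intro power_increasing) auto
  finally have "2^k + side \<epsilon> c k < (2::int)^m" .
  thus ?thesis by (auto simp: Qsq_def)
qed

lemma Q_eq: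
  assumes e: "0 < \<epsilon>" and c: "c \<ge> 12" and "x \<in> Qsq \<epsilon> c k" "x \<in> Qsq \<epsilon> c m"
  shows "k = m"
proof (rule ccontr)
  assume "k \<noteq> m"
  hence "k < m \<or> m < k" by arith
  thus False using Q_disj[OF e c, of k m] Q_disj[OF e c, of m k] assms(3,4) by blast
qed

lemma Q_finite: "finite (Qsq \<epsilon> c k)"
proof -
  have "Qsq \<epsilon> c k \<subseteq> {2^k..2^k + side \<epsilon> c k} \<times> {Ytop \<epsilon> k - side \<epsilon> c k..Ytop \<epsilon> k}"
    by (auto simp: Qsq_def)
  thus ?thesis by (rule finite_subset) auto
qed

lemma g_step:
  assumes e: "0 < \<epsilon>" "\<epsilon> \<le> 1" and m: "m \<ge> 1"
  shows "2^m / real m powr \<epsilon> \<le> 2^(Suc m) / real (Suc m) powr \<epsilon>"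
proof -
  have mp: "real m powr \<epsilon> > 0" using m by simp
  have "real (Suc m) powr \<epsilon> \<le> (2 * real m) powr \<epsilon>" using m e by (intro powr_mono2) auto
  also have "\<dots> = 2 powr \<epsilon> * real m powr \<epsilon>" by (simp add: powr_mult)
  also have "2 powr \<epsilon> \<le> 2 powr (1::real)" using e by (intro powr_mono) auto
  hence "2 powr \<epsilon> * real m powr \<epsilon> \<le> 2 * real m powr \<epsilon>" using mp by simp
  finally have h: "real (Suc m) powr \<epsilon> \<le> 2 * real m powr \<epsilon>" .
  have sp: "real (Suc m) powr \<epsilon> > 0" by simp
  have "2^m / real m powr \<epsilon> = 2^(Suc m) / (2 * real m powr \<epsilon>)" by simp
  also have "\<dots> \<le> 2^(Suc m) / real (Suc m) powr \<epsilon>" using h sp mp by (intro divide_left_mono) auto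
  finally show ?thesis .
qed

lemma g_mono:
  assumes e: "0 < \<epsilon>" "\<epsilon> \<le> 1" and m: "1 \<le> m" "m \<le> n"
  shows "2^m / real m powr \<epsilon> \<le> 2^n / real n powr \<epsilon>"
  using m(2)
proof (induction n rule: dec_induct)
  case base then show ?case by simp
next
  case (step n)
  have "n \<ge> 1" using step m by simp
  then show ?case using step g_step[OF e, of n] by linarith
qed

lemma sum_sig:
  assumes e: "0 < \<epsilon>" "\<epsilon> < 1" and c: "c > 0" and n0: "n0 \<ge> 7" and n: "n0 \<le> n"
  shows "(\<Sum>m\<in>{n0..<n}. sig \<epsilon> c m) \<le> 2 * sig \<epsilon> c n"
  using n
proof (induction n rule: dec_induct)
  case base then show ?case using sig_nonneg[OF c] by simp
next
  case (step n)
  have n7: "n \<ge> 7" using step n0 by simp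
  define r where "r = (real n + 1) / real n"
  have np: "real n > 0" using n7 by simp
  have r1: "r \<ge> 1" using np by (simp add: r_def)
  have r2: "r \<le> 8/7" unfolding r_def using np n7 by (simp add: pos_divide_le_eq)
  have "r powr (1+\<epsilon>) \<le> r powr (2::real)" using r1 e by (intro powr_mono) auto
  also have "\<dots> = r^2" using powr_realpow[of r 2] r1 by simp
  also have "\<dots> \<le> (8/7)^2" using r1 r2 by (intro power_mono) auto
  also have "(8/7::real)^2 = 64/49" by (simp add: power2_eq_square)
  finally have rp: "r powr (1+\<epsilon>) \<le> 64/49" .
  have eqn: "real (Suc n) powr (1+\<epsilon>) = real n powr (1+\<epsilon>) * r powr (1+\<epsilon>)"
  proof -
    have "real (Suc n) = real n * r" using n7 by (simp add: r_def)
    thus ?thesis using r1 by (simp add: powr_mult)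
  qed
  define A where "A = real n powr (1+\<epsilon>)"
  define B where "B = real (Suc n) powr (1+\<epsilon>)"
  have Ap: "A > 0" using n7 by (simp add: A_def)
  have "B \<le> A * (64/49)" unfolding B_def eqn A_def[symmetric] using rp Ap by (intro mult_left_mono) auto
  hence B: "3 * B \<le> 4 * A" using Ap by linarith
  have Bp: "B > 0" by (simp add: B_def)
  have "3 * sig \<epsilon> c n \<le> 2 * sig \<epsilon> c (Suc n)"
  proof -
    have "3 * sig \<epsilon> c n = (3 * 2^n / c) / A" by (simp add: sig_def A_def)
    also have "\<dots> \<le> (4 * 2^n / c) / B"
    proof -
      have xp: "2^n / c > 0" using c by simp
      have "(2^n / c) * (3 * B) \<le> (2^n / c) * (4 * A)" using B xp by (intro mult_left_mono) auto
      hence "(3 * 2^n / c) * B \<le> (4 * 2^n / c) * A" by (simp add: algebra_simps)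
      thus ?thesis by (simp only: cross_le[OF Ap Bp])
    qed
    also have "\<dots> = 2 * sig \<epsilon> c (Suc n)" by (simp add: sig_def B_def)
    finally show ?thesis .
  qed
  moreover have "(\<Sum>m\<in>{n0..<Suc n}. sig \<epsilon> c m) = (\<Sum>m\<in>{n0..<n}. sig \<epsilon> c m) + sig \<epsilon> c n"
    using step by simp
  ultimately show ?case using step by linarith
qed

lemma harm_ln_nat:
  assumes "N \<ge> 1"
  shows "(\<Sum>a\<in>{1..int N}. 1 / real_of_int a) \<le> 1 + ln (real N)"
  using assms
proof (induction N rule: dec_induct)
  case base then show ?case by simp
next
  case (step N)
  have Np: "real N > 0" using step by simp
  have "ln (real N / real (Suc N)) \<le> real N / real (Suc N) - 1" using Np by (intro ln_le_minus_one) simp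
  also have "\<dots> = - 1 / real (Suc N)" by (simp add: field_simps)
  finally have "ln (real N) - ln (real (Suc N)) \<le> - 1 / real (Suc N)" using Np by (simp add: ln_div)
  hence h: "1 / real (Suc N) \<le> ln (real (Suc N)) - ln (real N)" by simp
  have eq: "{1..int (Suc N)} = insert (int N + 1) {1..int N}" by auto
  have "(\<Sum>a\<in>{1..int (Suc N)}. 1 / real_of_int a) = 1 / real (Suc N) + (\<Sum>a\<in>{1..int N}. 1 / real_of_int a)"
    by (subst eq, subst sum.insert) auto
  then show ?case using step h by linarith
qed

lemma harm_ln:
  assumes "(s::int) \<ge> 1"
  shows "(\<Sum>a\<in>{1..s}. 1 / real_of_int a) \<le> 1 + ln (real_of_int s)"
proof -
  have "s = int (nat s)" using assms by simp
  moreover have "nat s \<ge> 1" using assms by simp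
  ultimately show ?thesis using harm_ln_nat[of "nat s"] by (metis of_int_of_nat_eq)
qed

lemma pairs0_finite: "finite (pairs0 X0 Y0 s)"
proof -
  have "pairs0 X0 Y0 s \<subseteq> Pow (box X0 Y0 s)" by (auto simp: pairs0_def)
  thus ?thesis using box_finite by (meson finite_Pow_iff finite_subset)
qed

lemma trans_card:
  fixes w :: pt and P Yt s :: int
  shows "card {{u,v} | u v. u \<in> {(x,y). P \<le> x \<and> x \<le> P+s \<and> Yt - s \<le> y \<and> y \<le> Yt} \<and>
                           v \<in> {(x,y). P \<le> x \<and> x \<le> P+s \<and> Yt - s \<le> y \<and> y \<le> Yt} \<and> u \<noteq> v \<and> coll u v w}
         \<le> card (pairs0 (P - fst w) (Yt - s - snd w) s)"
proof -
  let ?R = "{(x,y). P \<le> x \<and> x \<le> P+s \<and> Yt - s \<le> y \<and> y \<le> Yt}"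
  let ?L = "{{u,v} | u v. u \<in> ?R \<and> v \<in> ?R \<and> u \<noteq> v \<and> coll u v w}"
  define tr where "tr = (\<lambda>p::pt. (fst p + fst w, snd p + snd w))"
  define un where "un = (\<lambda>p::pt. (fst p - fst w, snd p - snd w))"
  have sub: "?L \<subseteq> (\<lambda>B. tr ` B) ` pairs0 (P - fst w) (Yt - s - snd w) s"
  proof
    fix B assume "B \<in> ?L"
    then obtain u v where B: "B = {u,v}" and u: "u \<in> ?R" and v: "v \<in> ?R" and ne: "u \<noteq> v" and co: "coll u v w"
      by blast
    have ub: "un u \<in> box (P - fst w) (Yt - s - snd w) s" using u by (auto simp: un_def box_def)
    have vb: "un v \<in> box (P - fst w) (Yt - s - snd w) s" using v by (auto simp: un_def box_def)
    have ne': "un u \<noteq> un v" using ne by (auto simp: un_def prod_eq_iff)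
    have co': "coll (un u) (un v) (0,0)" using co by (simp add: coll_def un_def algebra_simps)
    have inp: "{un u, un v} \<in> pairs0 (P - fst w) (Yt - s - snd w) s"
      unfolding pairs0_def using ub vb ne' co' by blast
    have "tr ` {un u, un v} = {u, v}" by (simp add: tr_def un_def)
    thus "B \<in> (\<lambda>B. tr ` B) ` pairs0 (P - fst w) (Yt - s - snd w) s" using inp B by (metis image_eqI)
  qed
  have "card ?L \<le> card ((\<lambda>B. tr ` B) ` pairs0 (P - fst w) (Yt - s - snd w) s)"
    by (rule card_mono[OF finite_imageI[OF pairs0_finite] sub])
  also have "\<dots> \<le> card (pairs0 (P - fst w) (Yt - s - snd w) s)" by (rule card_image_le[OF pairs0_finite])
  finally show ?thesis .
qed

lemma pr_less:
  assumes "side \<epsilon> c m \<ge> 3"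
  shows "pr \<epsilon> c m < side \<epsilon> c m"
proof -
  let ?P = "\<lambda>p::int. prime p \<and> p < side \<epsilon> c m"
  have fin: "finite {p. ?P p}"
  proof -
    have "{p. ?P p} \<subseteq> {0..side \<epsilon> c m}"
    proof
      fix p assume "p \<in> {p. ?P p}"
      hence "prime p" "p < side \<epsilon> c m" by auto
      moreover have "p \<ge> 2" using prime_ge_2_int[OF \<open>prime p\<close>] .
      ultimately show "p \<in> {0..side \<epsilon> c m}" by simp
    qed
    thus ?thesis by (rule finite_subset) auto
  qed
  have ex: "\<exists>p. ?P p" using assms by (intro exI[of _ 2]) auto
  have "pr \<epsilon> c m = Max {p. ?P p}" unfolding pr_def by (rule Greatest_Max[OF fin ex])
  moreover have "Max {p. ?P p} \<in> {p. ?P p}" using fin ex by (intro Max_in) auto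
  ultimately show ?thesis by simp
qed

lemma parab_sub:
  "parab \<epsilon> c m a b \<subseteq> (\<lambda>x. (2^m + x, Ytop \<epsilon> m - ((x - a)^2 + b) mod pr \<epsilon> c m)) ` {0..<pr \<epsilon> c m}"
proof
  fix q assume "q \<in> parab \<epsilon> c m a b"
  then obtain x y where q: "q = (2^m + x, Ytop \<epsilon> m - y)" and x: "0 \<le> x" "x < pr \<epsilon> c m"
    and y: "y = ((x - a)^2 + b) mod pr \<epsilon> c m"
    unfolding parab_def by blast
  show "q \<in> (\<lambda>x. (2^m + x, Ytop \<epsilon> m - ((x - a)^2 + b) mod pr \<epsilon> c m)) ` {0..<pr \<epsilon> c m}"
    by (rule image_eqI[of _ _ x]) (simp_all add: q y x)
qed

lemma parab_card:
  assumes "side \<epsilon> c m \<ge> 3"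
  shows "card (parab \<epsilon> c m a b) \<le> nat (side \<epsilon> c m)"
proof -
  let ?p = "pr \<epsilon> c m"
  have "card (parab \<epsilon> c m a b) \<le> card ((\<lambda>x. (2^m + x, Ytop \<epsilon> m - ((x - a)^2 + b) mod ?p)) ` {0..<?p})"
    by (rule card_mono[OF finite_imageI[OF finite_atLeastLessThan_int] parab_sub])
  also have "\<dots> \<le> card {0..<?p}" by (rule card_image_le) simp
  also have "\<dots> = nat ?p" by simp
  also have "\<dots> \<le> nat (side \<epsilon> c m)" using pr_less[OF assms] by simp
  finally show ?thesis .
qed

lemma S_card:
  assumes cons: "constructed \<epsilon> c n0 S" and m: "m \<ge> n0" and s3: "side \<epsilon> c m \<ge> 3"
  shows "card (S \<inter> Qsq \<epsilon> c m) \<le> nat (side \<epsilon> c m)"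
proof -
  have H: "\<forall>n\<ge>n0. \<exists>a b f.
        a \<in> {0..<pr \<epsilon> c n} \<and> b \<in> {0..<pr \<epsilon> c n} \<and>
        (\<forall>a'\<in>{0..<pr \<epsilon> c n}. \<forall>b'\<in>{0..<pr \<epsilon> c n}.
           card (mixed_triples (parab \<epsilon> c n a b) (Sbefore \<epsilon> c S n))
             \<le> card (mixed_triples (parab \<epsilon> c n a' b') (Sbefore \<epsilon> c S n))) \<and>
        (\<forall>t\<in>mixed_triples (parab \<epsilon> c n a b) (Sbefore \<epsilon> c S n).
           f t \<in> t \<inter> parab \<epsilon> c n a b) \<and>
        S \<inter> Qsq \<epsilon> c n = parab \<epsilon> c n a b
            - f ` mixed_triples (parab \<epsilon> c n a b) (Sbefore \<epsilon> c S n)"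
    using cons unfolding constructed_def by (rule conjunct2)
  from H m obtain a b f where eq: "S \<inter> Qsq \<epsilon> c m = parab \<epsilon> c m a b
            - f ` mixed_triples (parab \<epsilon> c m a b) (Sbefore \<epsilon> c S m)"
    by (meson)
  have fin: "finite (parab \<epsilon> c m a b)"
  proof -
    show ?thesis by (rule finite_subset[OF parab_sub]) simp
  qed
  have "card (S \<inter> Qsq \<epsilon> c m) \<le> card (parab \<epsilon> c m a b)" unfolding eq using fin by (intro card_mono) auto
  also have "\<dots> \<le> nat (side \<epsilon> c m)" by (rule parab_card[OF s3])
  finally show ?thesis .
qed

lemma J_bound:
  fixes X Y s :: real
  assumes "X > 0" "Y \<ge> 0" "s \<ge> 0"
  shows "(Y+s)/X - Y/(X+s) \<le> (s/X)*(1+(Y+s)/X)"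
proof -
  have e1: "(Y+s)/X - Y/(X+s) = s*(X+Y+s)/(X*(X+s))" using assms by (simp add: field_simps)
  have "s*(X+Y+s)/(X*(X+s)) \<le> s*(X+Y+s)/(X*X)"
    using assms by (intro divide_left_mono mult_left_mono mult_pos_pos) auto
  also have "\<dots> = (s/X)*(1+(Y+s)/X)" using assms by (simp add: field_simps)
  finally show ?thesis using e1 by simp
qed

lemma kJ_lemma:
  fixes K Z J V c :: real
  assumes "0 \<le> K" "K \<le> 4*Z" "Z > 0" "0 \<le> J" "J \<le> 8 / (c * (Z * V))" "c > 0" "V > 0" "32 / V < c"
  shows "K * J < 1"
proof -
  have "K * J \<le> (4*Z) * (8 / (c * (Z * V)))" using assms by (intro mult_mono) auto
  also have "\<dots> = (32 / V) / c" using assms by (simp add: field_simps)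
  also have "\<dots> < 1" using assms by (simp add: divide_less_eq mult.commute)
  finally show ?thesis .
qed

lemma bound_mono:
  fixes s \<sigma> am Jb Hb kk q :: real
  assumes "0 \<le> s" "s \<le> \<sigma>" "0 < am" "0 \<le> Jb" "0 \<le> Hb" "0 < q" "q \<le> kk"
  shows "(s/am+1)*(s/am)/2 + (Jb*s^2*(Hb+1) + s^2/kk + s*Hb)/2
       \<le> (\<sigma>/am+1)*(\<sigma>/am)/2 + (Jb*\<sigma>^2*(Hb+1) + \<sigma>^2/q + \<sigma>*Hb)/2"
proof -
  have a: "s/am \<le> \<sigma>/am" using assms by (intro divide_right_mono) auto
  have a0: "0 \<le> s/am" using assms by simp
  have t1: "(s/am+1)*(s/am) \<le> (\<sigma>/am+1)*(\<sigma>/am)" using a a0 by (intro mult_mono) auto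
  have sq: "s^2 \<le> \<sigma>^2" using assms by (intro power_mono) auto
  have t2: "Jb*s^2*(Hb+1) \<le> Jb*\<sigma>^2*(Hb+1)" using sq assms by (intro mult_right_mono mult_left_mono) auto
  have t3: "s^2/kk \<le> \<sigma>^2/q" using sq assms by (intro frac_le) auto
  have t4: "s*Hb \<le> \<sigma>*Hb" using assms by (intro mult_right_mono) auto
  have u1: "(s/am+1)*(s/am)/2 \<le> (\<sigma>/am+1)*(\<sigma>/am)/2" by (rule divide_right_mono[OF t1]) simp
  have u2: "(Jb*s^2*(Hb+1) + s^2/kk + s*Hb)/2 \<le> (Jb*\<sigma>^2*(Hb+1) + \<sigma>^2/q + \<sigma>*Hb)/2"
    by (rule divide_right_mono[OF add_mono[OF add_mono[OF t2 t3] t4]]) simp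
  show ?thesis by (rule add_mono[OF u1 u2])
qed

lemma lin_aux:
  fixes P wx sm Q :: int
  assumes "0 < P" "wx \<le> P + sm" "12*sm \<le> P" "2*P \<le> Q"
  shows "Q \<le> 4*(Q - wx)"
proof -
  have "12*wx \<le> 12*P + 12*sm" using assms(2) by simp
  hence a: "12*wx \<le> 13*P" using assms(3) by simp
  have b: "13*P \<le> 18*P" using assms(1) by simp
  have c: "18*P \<le> 9*Q" using assms(4) by simp
  from a b c have "12*wx \<le> 9*Q" by simp
  hence "4*wx \<le> 3*Q" by simp
  thus ?thesis by (simp add: algebra_simps)
qed

theorem lemma3p8:
  fixes \<epsilon> c :: real
  assumes "0 < \<epsilon>" "\<epsilon> < 1" "c \<ge> 12 / \<epsilon>"
  shows "\<exists>N0. \<forall>n0\<ge>N0. \<forall>S. constructed \<epsilon> c n0 S \<longrightarrow>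
           (\<exists>N. \<forall>n\<ge>N. real (card (blue_pairs \<epsilon> c S n))
                 \<le> 8 * 2 ^ (3 * n) / (c ^ 4 * real n powr (3 + 4 * \<epsilon>)))"
proof -
  have e0: "0 < \<epsilon>" and e1: "\<epsilon> < 1" using assms by auto
  have "12 \<le> 12 / \<epsilon>" using e0 e1 by (simp add: le_divide_eq)
  hence c12: "c \<ge> 12" using assms(3) by linarith
  hence c0: "c > 0" by simp
  have "eventually (\<lambda>m. sig \<epsilon> c m \<ge> 4 \<and> m \<ge> 7) sequentially"
    using asym5[OF e0 e1 c0] eventually_ge_at_top[of 7] by (rule eventually_conj)
  then obtain N0 where N0: "\<And>m. m \<ge> N0 \<Longrightarrow> sig \<epsilon> c m \<ge> 4 \<and> m \<ge> 7"
    by (auto simp: eventually_sequentially)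
  have "eventually (\<lambda>n. (2^n / real n powr \<epsilon> / 4 - 1 - sig \<epsilon> c n > 0) \<and>
      (32 / real n powr ((1-\<epsilon>)/2) < c \<and> 1 + 4 / real n powr \<epsilon> \<le> 2) \<and>
      (2*sig \<epsilon> c n*((sig \<epsilon> c n/(real n powr \<epsilon>/4)+1)*(sig \<epsilon> c n/(real n powr \<epsilon>/4))/2
     + ((4 * sig \<epsilon> c n / 2^n * (1 + 4 / real n powr \<epsilon>))*(sig \<epsilon> c n)^2*((1 + real n)+1) + (sig \<epsilon> c n)^2/real n powr ((1+3*\<epsilon>)/4) + sig \<epsilon> c n*(1 + real n))/2)
       \<le> 8*2^(3*n)/(c^4*real n powr (3+4*\<epsilon>))) \<and>
      (2^n / 2 / (real n - 1) powr \<epsilon> \<le> 3/4 * (2^n / real n powr \<epsilon>)) \<and> n \<ge> 2) sequentially"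
    by (intro eventually_conj asym1[OF e0 e1 c0] asym2[OF e0 e1 c0] asym4[OF e0 e1 c0]
          asym6[OF e0 e1 c0] eventually_ge_at_top)
  then obtain N1 where N1: "\<And>n. n \<ge> N1 \<Longrightarrow> (2^n / real n powr \<epsilon> / 4 - 1 - sig \<epsilon> c n > 0) \<and>
      (32 / real n powr ((1-\<epsilon>)/2) < c \<and> 1 + 4 / real n powr \<epsilon> \<le> 2) \<and>
      (2*sig \<epsilon> c n*((sig \<epsilon> c n/(real n powr \<epsilon>/4)+1)*(sig \<epsilon> c n/(real n powr \<epsilon>/4))/2
     + ((4 * sig \<epsilon> c n / 2^n * (1 + 4 / real n powr \<epsilon>))*(sig \<epsilon> c n)^2*((1 + real n)+1) + (sig \<epsilon> c n)^2/real n powr ((1+3*\<epsilon>)/4) + sig \<epsilon> c n*(1 + real n))/2)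
       \<le> 8*2^(3*n)/(c^4*real n powr (3+4*\<epsilon>))) \<and>
      (2^n / 2 / (real n - 1) powr \<epsilon> \<le> 3/4 * (2^n / real n powr \<epsilon>)) \<and> n \<ge> 2"
    by (auto simp: eventually_sequentially)
  show ?thesis
  proof (rule exI[of _ N0], intro allI impI)
    fix n0 S assume n0: "N0 \<le> n0" and cons: "constructed \<epsilon> c n0 S"
    have n07: "n0 \<ge> 7" using N0[OF n0] by auto
    have Ssub: "S \<subseteq> (\<Union>n\<in>{n0..}. Qsq \<epsilon> c n)" using cons by (simp add: constructed_def)
    have sd: "side \<epsilon> c m = \<lfloor>sig \<epsilon> c m\<rfloor>" for m by (simp add: side_def sig_def)
    have s3: "side \<epsilon> c m \<ge> 3" if "m \<ge> n0" for m
    proof -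
      have "sig \<epsilon> c m \<ge> 4" using N0[of m] that n0 by auto
      thus ?thesis unfolding sd by linarith
    qed
    have Sm: "S \<inter> Qsq \<epsilon> c m = {}" if "m < n0" for m
    proof (rule ccontr)
      assume "S \<inter> Qsq \<epsilon> c m \<noteq> {}"
      then obtain x where x: "x \<in> S" "x \<in> Qsq \<epsilon> c m" by auto
      then obtain k where k: "k \<ge> n0" "x \<in> Qsq \<epsilon> c k" using Ssub by auto
      have "k = m" by (rule Q_eq[OF e0 c12 k(2) x(2)])
      thus False using k that by simp
    qed
    have cardSQ: "real (card (S \<inter> Qsq \<epsilon> c m)) \<le> sig \<epsilon> c m" if "m \<ge> n0" for m
    proof -
      have "card (S \<inter> Qsq \<epsilon> c m) \<le> nat (side \<epsilon> c m)" by (rule S_card[OF cons that s3[OF that]])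
      hence "real (card (S \<inter> Qsq \<epsilon> c m)) \<le> real_of_int (side \<epsilon> c m)" using s3[OF that] by linarith
      thus ?thesis using side_facts(2)[OF e0 c12, of m] by linarith
    qed
    show "\<exists>N. \<forall>n\<ge>N. real (card (blue_pairs \<epsilon> c S n))
                 \<le> 8 * 2 ^ (3 * n) / (c ^ 4 * real n powr (3 + 4 * \<epsilon>))"
    proof (rule exI[of _ "max N1 (n0+1)"], intro allI impI)
      fix n assume nN: "max N1 (n0+1) \<le> n"
      have nN1: "n \<ge> N1" and nn0: "n > n0" using nN by auto
      note C = N1[OF nN1]
      have A1: "2^n / real n powr \<epsilon> / 4 - 1 - sig \<epsilon> c n > 0" using C by blast
      have A2a: "32 / real n powr ((1-\<epsilon>)/2) < c" and A2b: "1 + 4 / real n powr \<epsilon> \<le> 2" using C by blast+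
      have A6: "2^n / 2 / (real n - 1) powr \<epsilon> \<le> 3/4 * (2^n / real n powr \<epsilon>)" using C by blast
      have n2: "n \<ge> 2" using C by blast
      define \<sigma> where "\<sigma> = sig \<epsilon> c n"
      define s where "s = side \<epsilon> c n"
      define Y where "Y = Ytop \<epsilon> n"
      define am where "am = real n powr \<epsilon> / 4"
      define Jb where "Jb = 4 * \<sigma> / 2^n * (1 + 4 / real n powr \<epsilon>)"
      define Hb where "Hb = 1 + real n"
      define q where "q = real n powr ((1+3*\<epsilon>)/4)"
      define Bnd where "Bnd = (\<sigma>/am+1)*(\<sigma>/am)/2 + (Jb*\<sigma>^2*(Hb+1) + \<sigma>^2/q + \<sigma>*Hb)/2"
      have A4: "2 * \<sigma> * Bnd \<le> 8*2^(3*n)/(c^4*real n powr (3+4*\<epsilon>))"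
        using C unfolding Bnd_def \<sigma>_def am_def Jb_def Hb_def q_def by blast
      define W where "W = S \<inter> (\<Union>m<n. Qsq \<epsilon> c m)"
      define Pw where "Pw = (\<lambda>w. {{u,v} | u v. u \<in> Qsq \<epsilon> c n \<and> v \<in> Qsq \<epsilon> c n \<and> u \<noteq> v \<and> coll u v w})"
      have blue_sub: "blue_pairs \<epsilon> c S n \<subseteq> (\<Union>w\<in>W. Pw w)"
      proof
        fix B assume "B \<in> blue_pairs \<epsilon> c S n"
        then obtain u v m w where B: "B = {u,v}" and uv: "u \<in> Qsq \<epsilon> c n" "v \<in> Qsq \<epsilon> c n" "u \<noteq> v"
          and m: "m < n" and w: "w \<in> S \<inter> Qsq \<epsilon> c m" and co: "coll u v w"
          unfolding blue_pairs_def by blast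
        have "w \<in> W" using w m unfolding W_def by blast
        moreover have "B \<in> Pw w" unfolding Pw_def using B uv co by blast
        ultimately show "B \<in> (\<Union>w\<in>W. Pw w)" by blast
      qed
      have finW: "finite W"
      proof -
        have "W \<subseteq> (\<Union>m<n. Qsq \<epsilon> c m)" unfolding W_def by blast
        moreover have "finite (\<Union>m<n. Qsq \<epsilon> c m)" using Q_finite by blast
        ultimately show ?thesis by (rule finite_subset)
      qed
      have finPw: "finite (Pw w)" for w
      proof -
        have "Pw w \<subseteq> Pow (Qsq \<epsilon> c n)" unfolding Pw_def by blast
        thus ?thesis using Q_finite by (meson finite_Pow_iff finite_subset)
      qed
      have cardW: "real (card W) \<le> 2 * \<sigma>"
      proof -
        have sub: "W \<subseteq> (\<Union>m\<in>{n0..<n}. S \<inter> Qsq \<epsilon> c m)"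
        proof
          fix x assume "x \<in> W"
          then obtain m where m: "m < n" "x \<in> S" "x \<in> Qsq \<epsilon> c m" unfolding W_def by blast
          have "\<not> m < n0" using Sm[of m] m by blast
          thus "x \<in> (\<Union>m\<in>{n0..<n}. S \<inter> Qsq \<epsilon> c m)" using m by auto
        qed
        have finU: "finite (\<Union>m\<in>{n0..<n}. S \<inter> Qsq \<epsilon> c m)" using Q_finite by blast
        have "card W \<le> card (\<Union>m\<in>{n0..<n}. S \<inter> Qsq \<epsilon> c m)" by (rule card_mono[OF finU sub])
        also have "\<dots> \<le> (\<Sum>m\<in>{n0..<n}. card (S \<inter> Qsq \<epsilon> c m))" by (rule card_UN_le) simp
        finally have "real (card W) \<le> (\<Sum>m\<in>{n0..<n}. real (card (S \<inter> Qsq \<epsilon> c m)))"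
          by (simp only: of_nat_sum[symmetric] of_nat_le_iff)
        also have "\<dots> \<le> (\<Sum>m\<in>{n0..<n}. sig \<epsilon> c m)" using cardSQ by (intro sum_mono) auto
        also have "\<dots> \<le> 2 * sig \<epsilon> c n" using nn0 by (intro sum_sig[OF e0 e1 c0 n07]) auto
        finally show ?thesis by (simp add: \<sigma>_def)
      qed
      have perw: "real (card (Pw w)) \<le> Bnd" if wW: "w \<in> W" for w
      proof -
        obtain m where m: "m < n" "w \<in> S" "w \<in> Qsq \<epsilon> c m" using wW unfolding W_def by blast
        have mn0: "m \<ge> n0" using Sm[of m] m by (meson disjoint_iff not_le)
        have m1: "m \<ge> 1" using mn0 n07 by simp
        obtain wx wy where wdef: "w = (wx, wy)" by fastforce
        have wx: "2^m \<le> wx" "wx \<le> 2^m + side \<epsilon> c m" and wy: "Ytop \<epsilon> m - side \<epsilon> c m \<le> wy" "wy \<le> Ytop \<epsilon> m"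
          using m(3) unfolding wdef Qsq_def by auto
        define X0 where "X0 = 2^n - wx"
        define Y0 where "Y0 = Y - s - wy"
        have sm12: "12 * side \<epsilon> c m \<le> 2^m" by (rule side_facts(3)[OF e0 c12])
        have "(2::int)^(m+1) \<le> 2^n" using m by (intro power_increasing) auto
        hence pm: "2 * (2::int)^m \<le> 2^n" by simp
        have "(0::int) < 2^m" by simp
        hence X0b: "4 * X0 \<ge> 2^n" unfolding X0_def using lin_aux wx(2) sm12 pm by blast
        have X0r: "real_of_int X0 \<ge> 2^n / 4"
        proof -
          have "real_of_int (4 * X0) \<ge> real_of_int ((2::int)^n)" using X0b by (simp only: of_int_le_iff)
          thus ?thesis by simp
        qed
        have X0p: "X0 > 0" using X0b by (smt (verit) zero_less_power)
        have wy0: "wy \<ge> 0" using wy Ytop_facts(3)[OF e0 c12, of m] by linarith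
        have wyb: "real_of_int wy \<le> 3/4 * (2^n / real n powr \<epsilon>)"
        proof -
          have "real_of_int wy \<le> real_of_int (Ytop \<epsilon> m)" using wy by simp
          also have "\<dots> \<le> 2^m / real m powr \<epsilon>" by (rule Ytop_facts(1)[OF e0 c12])
          also have "\<dots> \<le> 2^(n-1) / real (n-1) powr \<epsilon>" using m m1 e0 e1 by (intro g_mono) auto
          also have "\<dots> = 2^n / 2 / (real n - 1) powr \<epsilon>"
          proof -
            have h1: "(2::real)^(n-1) = 2^n / 2" using n2 by (cases n) auto
            have h2: "real (n-1) = real n - 1" using n2 by simp
            show ?thesis by (simp only: h1 h2)
          qed
          also have "\<dots> \<le> 3/4 * (2^n / real n powr \<epsilon>)" by (rule A6)
          finally show ?thesis .
        qed
        have s0: "s \<ge> 0" and sle: "real_of_int s \<le> \<sigma>" and s3n: "s \<ge> 3"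
          using side_facts(1,2)[OF e0 c12, of n] s3[of n] nn0 by (auto simp: s_def \<sigma>_def)
        have Yb1: "real_of_int Y \<le> 2^n / real n powr \<epsilon>" and Yb2: "real_of_int Y \<ge> 2^n / real n powr \<epsilon> - 1"
          using Ytop_facts(1,2)[OF e0 c12, of n] by (auto simp: Y_def)
        have Y0r: "real_of_int Y0 > 0"
        proof -
          have "real_of_int Y0 = real_of_int Y - real_of_int s - real_of_int wy" by (simp add: Y0_def)
          also have "\<dots> \<ge> (2^n / real n powr \<epsilon> - 1) - \<sigma> - 3/4 * (2^n / real n powr \<epsilon>)"
            using Yb2 sle wyb by linarith
          finally have "real_of_int Y0 \<ge> 2^n / real n powr \<epsilon> / 4 - 1 - \<sigma>" by simp
          thus ?thesis using A1 unfolding \<sigma>_def by linarith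
        qed
        hence Y0p: "Y0 > 0" by simp
        have Y0s: "real_of_int (Y0 + s) \<le> 2^n / real n powr \<epsilon>" using Yb1 wy0 by (simp add: Y0_def)
        have Y0sp: "real_of_int (Y0 + s) > 0" using Y0p s0 by simp
        have npos: "real n > 0" using n2 by simp
        have c1: "card (Pw w) \<le> card (pairs0 X0 Y0 s)"
          unfolding Pw_def Qsq_def s_def[symmetric] Y_def[symmetric] X0_def Y0_def
          using trans_card[of "2^n" s Y w] by (simp add: wdef)
        define k where "k = \<lceil>q\<rceil>"
        have q1: "q \<ge> 1" unfolding q_def using n2 e0 by (intro ge_one_powr_ge_zero) auto
        have qk: "q \<le> real_of_int k" unfolding k_def by (rule le_of_int_ceiling)
        have kq: "real_of_int k \<le> q + 1" unfolding k_def by linarith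
        have k1: "k \<ge> 1" using q1 qk by linarith
        have Jle: "real_of_int (Y0+s) / real_of_int X0 - real_of_int Y0 / real_of_int (X0+s) \<le> Jb"
        proof -
          have "real_of_int (Y0+s) / real_of_int X0 - real_of_int Y0 / real_of_int (X0+s)
              \<le> (real_of_int s / real_of_int X0) * (1 + real_of_int (Y0+s) / real_of_int X0)"
            using J_bound[of "real_of_int X0" "real_of_int Y0" "real_of_int s"] X0p Y0p s0 by simp
          also have "\<dots> \<le> (\<sigma> / (2^n/4)) * (1 + (2^n / real n powr \<epsilon>) / (2^n/4))"
          proof -
            have sg0: "0 \<le> \<sigma>" using s0 sle by linarith
            have f1: "real_of_int s / real_of_int X0 \<le> \<sigma> / (2^n/4)"
              by (rule frac_le[OF sg0 sle]) (use X0r in auto)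
            have f2': "real_of_int (Y0 + s) / real_of_int X0 \<le> (2^n / real n powr \<epsilon>) / (2^n/4)"
              by (rule frac_le[OF _ Y0s]) (use X0r in auto)
            have f2: "1 + real_of_int (Y0 + s) / real_of_int X0 \<le> 1 + (2^n / real n powr \<epsilon>) / (2^n/4)"
              using f2' by linarith
            have p1: "0 \<le> \<sigma> / (2^n/4)" using sg0 by simp
            have p2: "0 \<le> 1 + real_of_int (Y0 + s) / real_of_int X0" using Y0sp X0p by simp
            show ?thesis by (rule mult_mono[OF f1 f2 p1 p2])
          qed
          also have "\<dots> = Jb" unfolding Jb_def by (simp add: field_simps)
          finally show ?thesis .
        qed
        have kJ: "(real_of_int k)^2 * Jb < 1"
        proof -
          define Z where "Z = real n powr ((1+3*\<epsilon>)/2)"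
          define V where "V = real n powr ((1-\<epsilon>)/2)"
          have Zp: "Z > 0" and Vp: "V > 0" using npos by (auto simp: Z_def V_def)
          have ex1: "(1+3*\<epsilon>)/4 + (1+3*\<epsilon>)/4 = (1+3*\<epsilon>)/2" by (simp add: field_simps)
          have ex2: "(1+3*\<epsilon>)/2 + (1-\<epsilon>)/2 = 1+\<epsilon>" by (simp add: field_simps)
          have qZ: "q^2 = Z" unfolding q_def Z_def power2_eq_square powr_add[symmetric] ex1 ..
          have ZV: "real n powr (1+\<epsilon>) = Z * V" unfolding Z_def V_def powr_add[symmetric] ex2 ..
          have "real_of_int k \<le> 2 * q" using kq q1 by linarith
          hence "(real_of_int k)^2 \<le> (2*q)^2" using k1 by (intro power_mono) auto
          hence K4: "(real_of_int k)^2 \<le> 4 * Z" using qZ by (simp add: power_mult_distrib)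
          have "Jb \<le> 4 * \<sigma> / 2^n * 2" unfolding Jb_def using A2b sle s0
            by (intro mult_left_mono) auto
          also have "\<dots> = 8 / (c * (Z * V))" unfolding \<sigma>_def sig_def ZV[symmetric] using c0 by (simp add: field_simps)
          finally have J8: "Jb \<le> 8 / (c * (Z * V))" .
          have Jb0: "Jb \<ge> 0" unfolding Jb_def using s0 sle by (intro mult_nonneg_nonneg) auto
          show ?thesis using kJ_lemma[OF _ K4 Zp Jb0 J8 c0 Vp] A2a unfolding V_def by simp
        qed
        have am0: "0 < am" unfolding am_def using npos by simp
        have amle: "am \<le> real_of_int X0 / real_of_int (Y0+s)"
        proof -
          have "am = (2^n/4) / (2^n / real n powr \<epsilon>)" unfolding am_def using npos by (simp add: field_simps)
          also have "\<dots> \<le> real_of_int X0 / real_of_int (Y0+s)"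
            using X0r Y0s Y0sp X0p by (intro frac_le) auto
          finally show ?thesis .
        qed
        have Hle: "(\<Sum>a\<in>{1..s}. 1 / real_of_int a) \<le> Hb"
        proof -
          have "(\<Sum>a\<in>{1..s}. 1 / real_of_int a) \<le> 1 + ln (real_of_int s)" using s3n by (intro harm_ln) auto
          also have "ln (real_of_int s) \<le> ln (2^n)"
          proof -
            have "\<sigma> \<le> 2^n"
            proof -
              have "real n powr (1+\<epsilon>) \<ge> 1" using n2 e0 by (intro ge_one_powr_ge_zero) auto
              hence "c * real n powr (1+\<epsilon>) \<ge> 12 * 1" using c12 by (intro mult_mono) auto
              hence "2^n / (c * real n powr (1+\<epsilon>)) \<le> 2^n / 1" by (intro divide_left_mono) auto
              thus ?thesis by (simp add: \<sigma>_def sig_def)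
            qed
            hence h: "real_of_int s \<le> 2^n" using sle by linarith
            have p: "0 < real_of_int s" using s3n by simp
            show ?thesis using ln_le_cancel_iff[of "real_of_int s" "2^n"] h p by simp
          qed
          also have "ln ((2::real)^n) = real n * ln 2" by (simp add: ln_realpow)
          also have "\<dots> \<le> real n * 1" using ln_2_less_1 by (intro mult_left_mono) auto
          finally show ?thesis unfolding Hb_def by simp
        qed
        have main: "real (card (pairs0 X0 Y0 s)) \<le> FF s am + (Jb * (real_of_int s)^2 * (Hb+1) + (real_of_int s)^2 / real_of_int k + real_of_int s * Hb) / 2"
          by (rule pairs0_bound[OF X0p Y0p s0 k1 Jle kJ am0 amle Hle])
        also have "\<dots> \<le> Bnd" unfolding Bnd_def FF_def
        proof (rule bound_mono)
          show "0 \<le> real_of_int s" using s0 by simp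
          show "real_of_int s \<le> \<sigma>" by (rule sle)
          show "0 < am" by (rule am0)
          show "0 \<le> Jb" unfolding Jb_def using s0 sle by (intro mult_nonneg_nonneg) auto
          show "0 \<le> Hb" unfolding Hb_def by simp
          show "0 < q" using q1 by simp
          show "q \<le> real_of_int k" by (rule qk)
        qed
        finally show ?thesis using c1 by linarith
      qed
      have Bnd0: "Bnd \<ge> 0"
      proof -
        have "\<sigma> \<ge> 0" unfolding \<sigma>_def using sig_nonneg[OF c0] .
        moreover have "am > 0" "q > 0" "Jb \<ge> 0" "Hb \<ge> 0" using n2 \<open>\<sigma> \<ge> 0\<close> by (auto simp: am_def q_def Jb_def Hb_def)
        ultimately show ?thesis unfolding Bnd_def by (intro add_nonneg_nonneg divide_nonneg_nonneg mult_nonneg_nonneg) auto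
      qed
      have "card (blue_pairs \<epsilon> c S n) \<le> card (\<Union>w\<in>W. Pw w)"
        using finW finPw by (intro card_mono[OF _ blue_sub]) auto
      also have "\<dots> \<le> (\<Sum>w\<in>W. card (Pw w))" by (rule card_UN_le[OF finW])
      finally have "real (card (blue_pairs \<epsilon> c S n)) \<le> (\<Sum>w\<in>W. real (card (Pw w)))"
        by (simp only: of_nat_sum[symmetric] of_nat_le_iff)
      also have "\<dots> \<le> (\<Sum>w\<in>W. Bnd)" using perw by (intro sum_mono) auto
      also have "\<dots> = real (card W) * Bnd" by simp
      also have "\<dots> \<le> (2 * \<sigma>) * Bnd" using cardW Bnd0 by (intro mult_right_mono) auto
      also have "\<dots> \<le> 8*2^(3*n)/(c^4*real n powr (3+4*\<epsilon>))" using A4 by simp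
      finally show "real (card (blue_pairs \<epsilon> c S n)) \<le> 8 * 2 ^ (3 * n) / (c ^ 4 * real n powr (3 + 4 * \<epsilon>))" .
    qed
  qed
qed

end
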